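(* Let $\mathbf{L}\in\{\mathbf{K}_D,\mathbf{KD}_D,\mathbf{KT}_D\}$. If $\mathsf{G}(\mathbf{L})\vdash\Gamma\Rightarrow\Delta$, then $\mathsf{H}(\mathbf{L})\vdash\Gamma_\star\rightarrow\Delta^\star$, where $\Gamma_\star$ is the conjunction of all formulas in $\Gamma$ ($\top$ if $\Gamma$ is empty) and $\Delta^\star$ is the disjunction of all formulas in $\Delta$ ($\bot$ if $\Delta$ is empty).
   Context: Language: fix a finite nonempty set $\mathsf{Agt}$ of agents and a countable set $\mathsf{Prop}$ of propositional variables; $\mathsf{Grp}$ is the set of nonempty subsets of $\mathsf{Agt}$. Formulas: $\alpha::=p\mid\bot\mid\alpha\wedge\alpha\mid\alpha\vee\alpha\mid\alpha\rightarrow\alpha\mid\neg\alpha\mid D_G\alpha$ ($p\in\mathsf{Prop}$, $G\in\mathsf{Grp}$). Outmost-boxed formula: one of the form $D_G\gamma$. Hilbert systems: $\mathsf{H}(\mathbf{K}_D)$ has all instances of propositional tautologies, $D_G(\alpha\rightarrow\beta)\rightarrow(D_G\alpha\rightarrow D_G\beta)$, $D_G\alpha\rightarrow D_H\alpha$ for $G\subseteq H$, modus ponens, and necessitation (from $\alpha$ infer $D_G\alpha$). $\mathsf{H}(\mathbf{KD}_D)$ adds $\neg D_{\{a\}}\bot$ for each $a\in\mathsf{Agt}$; $\mathsf{H}(\mathbf{KT}_D)$ adds $D_G\alpha\rightarrow\alpha$. Sequent calculi (sequents $\Gamma\Rightarrow\Delta$ are pairs of finite multisets; derivable = root of a finite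 tree built from initial sequents by rules): $\mathsf{G}(\mathbf{K}_D)$ has initial sequents $\Gamma,p\Rightarrow p,\Delta$ and $\bot,\Gamma\Rightarrow\Delta$; rules $(R\wedge)$ from $\Gamma\Rightarrow\Delta,\alpha_1$ and $\Gamma\Rightarrow\Delta,\alpha_2$ infer $\Gamma\Rightarrow\Delta,\alpha_1\wedge\alpha_2$; $(L\wedge)$ from $\alpha_1,\alpha_2,\Gamma\Rightarrow\Delta$ infer $\alpha_1\wedge\alpha_2,\Gamma\Rightarrow\Delta$; $(R\vee)$ from $\Gamma\Rightarrow\Delta,\alpha_1,\alpha_2$ infer $\Gamma\Rightarrow\Delta,\alpha_1\vee\alpha_2$; $(L\vee)$ from $\alpha_1,\Gamma\Rightarrow\Delta$ and $\alpha_2,\Gamma\Rightarrow\Delta$ infer $\alpha_1\vee\alpha_2,\Gamma\Rightarrow\Delta$; $(R\rightarrow)$ from $\alpha_1,\Gamma\Rightarrow\Delta,\alpha_2$ infer $\Gamma\Rightarrow\Delta,\alpha_1\rightarrow\alpha_2$; $(L\rightarrow)$ from $\Gamma\Rightarrow\Delta,\alpha_1$ and $\alpha_2,\Gamma\Rightarrow\Delta$ infer $\alpha_1\rightarrow\alpha_2,\Gamma\Rightarrow\Delta$; $(R\neg)$ from $\alpha,\Gamma\Rightarrow\Delta$ infer $\Gamma\Rightarrow\Delta,\neg\alpha$; $(L\neg)$ from $\Gamma\Rightarrow\Delta,\alpha$ infer $\neg\alpha,\Gamma\Rightarrow\Delta$; $(D_K)$: from $\alpha_1,\dots,\alpha_n\Rightarrow\beta$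 ($n\ge0$) infer $\Sigma,D_{G_1}\alpha_1,\dots,D_{G_n}\alpha_n\Rightarrow D_G\beta,\Omega$ where all $G_i\subseteq G$, $\Sigma$ consists only of propositional variables, $\bot$, and $D_H\gamma$ with $H\not\subseteq G$, and $\Omega$ only of propositional variables, $\bot$, outmost-boxed formulas. $\mathsf{G}(\mathbf{KD}_D)$ adds $(D_D)$: from $\Gamma\Rightarrow$ with $\Gamma\neq\emptyset$ infer $\Sigma,D_{\{a\}}\Gamma\Rightarrow\Omega$, $\Sigma$ only propositional variables, $\bot$, $D_H\gamma$ with $H\neq\{a\}$; $\Omega$ only propositional variables, $\bot$, outmost-boxed formulas. $\mathsf{G}(\mathbf{KT}_D)$ adds to $\mathsf{G}(\mathbf{K}_D)$ $(D_T)$: from $D_G\alpha,\alpha,\Gamma\Rightarrow\Delta$ infer $D_G\alpha,\Gamma\Rightarrow\Delta$. *)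

theory Defs
  imports "HOL-Library.Multiset"
begin

text \<open>Formulas over agents 'a (a finite type, nonempty as every HOL type) and
propositional variables nat (a countable set).  Group indices are sets of agents;
only nonempty ones belong to Grp, enforced by the predicate wff.\<close>

datatype 'a fm =
    Atom nat
  | Bot
  | And "'a fm" "'a fm"
  | Or "'a fm" "'a fm"
  | Imp "'a fm" "'a fm"
  | Neg "'a fm"
  | Dbox "'a set" "'a fm"

definition Grp :: "'a set set" where
  "Grp = {G. G \<noteq> {}}"

fun wff :: "'a fm \<Rightarrow> bool" where
  "wff (Atom p) = True"
| "wff Bot = True"
| "wff (And a b) = (wff a \<and> wff b)"
| "wff (Or a b) = (wff a \<and> wff b)"
| "wff (Imp a b) = (wff a \<and> wff b)"
| "wff (Neg a) = wff a"
| "wff (Dbox G a) = (G \<in> Grp \<and> wff a)"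

text \<open>Propositional evaluation, treating atoms and outmost-boxed formulas as
propositional letters; tautology instances are formulas true under all such valuations.\<close>

fun peval :: "('a fm \<Rightarrow> bool) \<Rightarrow> 'a fm \<Rightarrow> bool" where
  "peval v (Atom p) = v (Atom p)"
| "peval v Bot = False"
| "peval v (And a b) = (peval v a \<and> peval v b)"
| "peval v (Or a b) = (peval v a \<or> peval v b)"
| "peval v (Imp a b) = (peval v a \<longrightarrow> peval v b)"
| "peval v (Neg a) = (\<not> peval v a)"
| "peval v (Dbox G a) = v (Dbox G a)"

definition taut :: "'a fm \<Rightarrow> bool" where
  "taut a = (\<forall>v. peval v a)"

datatype logic = LK | LKD | LKT

inductive hilbert :: "logic \<Rightarrow> ('a::finite) fm \<Rightarrow> bool" for L where
  ax_taut: "wff a \<Longrightarrow> taut a \<Longrightarrow> hilbert L a"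
| ax_K: "G \<in> Grp \<Longrightarrow> wff a \<Longrightarrow> wff b \<Longrightarrow>
     hilbert L (Imp (Dbox G (Imp a b)) (Imp (Dbox G a) (Dbox G b)))"
| ax_mono: "G \<in> Grp \<Longrightarrow> H \<in> Grp \<Longrightarrow> G \<subseteq> H \<Longrightarrow> wff a \<Longrightarrow>
     hilbert L (Imp (Dbox G a) (Dbox H a))"
| ax_D: "L = LKD \<Longrightarrow> hilbert L (Neg (Dbox {ag} Bot))"
| ax_T: "L = LKT \<Longrightarrow> G \<in> Grp \<Longrightarrow> wff a \<Longrightarrow> hilbert L (Imp (Dbox G a) a)"
| mp: "hilbert L (Imp a b) \<Longrightarrow> hilbert L a \<Longrightarrow> hilbert L b"
| nec: "G \<in> Grp \<Longrightarrow> hilbert L a \<Longrightarrow> hilbert L (Dbox G a)"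

definition is_boxed :: "'a fm \<Rightarrow> bool" where
  "is_boxed a = (\<exists>H g. a = Dbox H g)"

definition ok_right :: "'a fm \<Rightarrow> bool" where
  "ok_right a = ((\<exists>p. a = Atom p) \<or> a = Bot \<or> is_boxed a)"

definition ok_left_K :: "'a set \<Rightarrow> 'a fm \<Rightarrow> bool" where
  "ok_left_K G a = ((\<exists>p. a = Atom p) \<or> a = Bot \<or> (\<exists>H g. a = Dbox H g \<and> \<not> H \<subseteq> G))"

definition ok_left_D :: "'a \<Rightarrow> 'a fm \<Rightarrow> bool" where
  "ok_left_D ag a = ((\<exists>p. a = Atom p) \<or> a = Bot \<or> (\<exists>H g. a = Dbox H g \<and> H \<noteq> {ag}))"

text \<open>Sequent calculi G(K_D), G(KD_D), G(KT_D); sequents are pairs of finite multisets.\<close>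

inductive gder :: "logic \<Rightarrow> ('a::finite) fm multiset \<Rightarrow> 'a fm multiset \<Rightarrow> bool" for L where
  init_p: "gder L (add_mset (Atom p) \<Gamma>) (add_mset (Atom p) \<Delta>)"
| init_bot: "gder L (add_mset Bot \<Gamma>) \<Delta>"
| R_and: "gder L \<Gamma> (add_mset a \<Delta>) \<Longrightarrow> gder L \<Gamma> (add_mset b \<Delta>) \<Longrightarrow>
     gder L \<Gamma> (add_mset (And a b) \<Delta>)"
| L_and: "gder L (add_mset a (add_mset b \<Gamma>)) \<Delta> \<Longrightarrow> gder L (add_mset (And a b) \<Gamma>) \<Delta>"
| R_or: "gder L \<Gamma> (add_mset a (add_mset b \<Delta>)) \<Longrightarrow> gder L \<Gamma> (add_mset (Or a b) \<Delta>)"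
| L_or: "gder L (add_mset a \<Gamma>) \<Delta> \<Longrightarrow> gder L (add_mset b \<Gamma>) \<Delta> \<Longrightarrow>
     gder L (add_mset (Or a b) \<Gamma>) \<Delta>"
| R_imp: "gder L (add_mset a \<Gamma>) (add_mset b \<Delta>) \<Longrightarrow> gder L \<Gamma> (add_mset (Imp a b) \<Delta>)"
| L_imp: "gder L \<Gamma> (add_mset a \<Delta>) \<Longrightarrow> gder L (add_mset b \<Gamma>) \<Delta> \<Longrightarrow>
     gder L (add_mset (Imp a b) \<Gamma>) \<Delta>"
| R_neg: "gder L (add_mset a \<Gamma>) \<Delta> \<Longrightarrow> gder L \<Gamma> (add_mset (Neg a) \<Delta>)"
| L_neg: "gder L \<Gamma> (add_mset a \<Delta>) \<Longrightarrow> gder L (add_mset (Neg a) \<Gamma>) \<Delta>"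
| D_K: "gder L (mset (map snd prs)) {#b#} \<Longrightarrow>
     (\<forall>Gi \<in> set (map fst prs). Gi \<subseteq> G) \<Longrightarrow>
     (\<forall>s \<in># \<Sigma>. ok_left_K G s) \<Longrightarrow> (\<forall>w \<in># \<Omega>. ok_right w) \<Longrightarrow>
     gder L (\<Sigma> + mset (map (\<lambda>(Gi, a). Dbox Gi a) prs)) (add_mset (Dbox G b) \<Omega>)"
| D_D: "L = LKD \<Longrightarrow> gder L \<Gamma> {#} \<Longrightarrow> \<Gamma> \<noteq> {#} \<Longrightarrow>
     (\<forall>s \<in># \<Sigma>. ok_left_D ag s) \<Longrightarrow> (\<forall>w \<in># \<Omega>. ok_right w) \<Longrightarrow>
     gder L (\<Sigma> + image_mset (Dbox {ag}) \<Gamma>) \<Omega>"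
| D_T: "L = LKT \<Longrightarrow> gder L (add_mset (Dbox G a) (add_mset a \<Gamma>)) \<Delta> \<Longrightarrow>
     gder L (add_mset (Dbox G a) \<Gamma>) \<Delta>"

definition Top :: "'a fm" where "Top = Neg Bot"

fun Conj :: "'a fm list \<Rightarrow> 'a fm" where
  "Conj [] = Top"
| "Conj [a] = a"
| "Conj (a # as) = And a (Conj as)"

fun Disj :: "'a fm list \<Rightarrow> 'a fm" where
  "Disj [] = Bot"
| "Disj [a] = a"
| "Disj (a # as) = Or a (Disj as)"

end

theory Submission
  imports Defs
begin

lemma peval_Conj: "peval v (Conj gs) = (\<forall>g\<in>#mset gs. peval v g)"
  by (induction gs rule: Conj.induct) (auto simp: Top_def)

lemma peval_Disj: "peval v (Disj ds) = (\<exists>g\<in>#mset ds. peval v g)"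
  by (induction ds rule: Disj.induct) auto

lemma wff_Conj: "wff (Conj gs) = (\<forall>g\<in>#mset gs. wff g)"
  by (induction gs rule: Conj.induct) (auto simp: Top_def)

lemma wff_Disj: "wff (Disj ds) = (\<forall>g\<in>#mset ds. wff g)"
  by (induction ds rule: Disj.induct) auto

lemma hilbert_wff: "hilbert L a \<Longrightarrow> wff a"
  by (induction rule: hilbert.induct) (auto simp: Grp_def)

lemma hilbert_taut:
  "(\<forall>p\<in>set Ps. hilbert L p) \<Longrightarrow> wff C \<Longrightarrow> (\<forall>v. (\<forall>p\<in>set Ps. peval v p) \<longrightarrow> peval v C)
   \<Longrightarrow> hilbert L C"
proof (induction Ps arbitrary: C)
  case Nil
  then show ?case by (auto intro: ax_taut simp: taut_def)
next
  case (Cons p Ps)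
  have "hilbert L (Imp p C)"
    using Cons by (intro Cons.IH) (auto dest: hilbert_wff)
  then show ?case using Cons.prems by (auto intro: mp)
qed

lemma conj_box:
  assumes "G \<in> Grp" "\<forall>a\<in>set as. wff a"
  shows "hilbert L (Imp (Conj (map (Dbox G) as)) (Dbox G (Conj as)))"
  using assms(2)
proof (induction as)
  case Nil
  have "hilbert L (Dbox G Top)"
    by (rule nec[OF assms(1)], rule ax_taut) (auto simp: taut_def Top_def)
  then show ?case
    by (intro hilbert_taut[of "[Dbox G Top]"]) (auto simp: Top_def assms(1))
next
  case (Cons a as)
  let ?X = "Imp a (Imp (Conj as) (Conj (a#as)))"
  have wa: "wff a" "wff (Conj as)" "wff (Conj (a#as))" using Cons.prems
    by (auto simp: wff_Conj)
  have n: "hilbert L (Dbox G ?X)"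
    by (rule nec[OF assms(1)], rule ax_taut) (use wa in \<open>auto simp: taut_def peval_Conj\<close>)
  have k1: "hilbert L (Imp (Dbox G ?X) (Imp (Dbox G a) (Dbox G (Imp (Conj as) (Conj (a#as))))))"
    using wa assms(1) by (intro ax_K) auto
  have k2: "hilbert L (Imp (Dbox G (Imp (Conj as) (Conj (a#as)))) (Imp (Dbox G (Conj as)) (Dbox G (Conj (a#as)))))"
    using wa assms(1) by (intro ax_K) auto
  have ih: "hilbert L (Imp (Conj (map (Dbox G) as)) (Dbox G (Conj as)))"
    using Cons by auto
  show ?case
    apply (rule hilbert_taut[of "[Dbox G ?X, Imp (Dbox G ?X) (Imp (Dbox G a) (Dbox G (Imp (Conj as) (Conj (a#as))))),
       Imp (Dbox G (Imp (Conj as) (Conj (a#as)))) (Imp (Dbox G (Conj as)) (Dbox G (Conj (a#as)))),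
       Imp (Conj (map (Dbox G) as)) (Dbox G (Conj as))]"])
    using n k1 k2 ih wa assms(1) Cons.prems
    by (auto simp: peval_Conj wff_Conj)
qed

lemma main:
  "gder L \<Gamma> \<Delta> \<Longrightarrow> (\<forall>a \<in># \<Gamma> + \<Delta>. wff a) \<Longrightarrow>
   \<forall>gs ds. mset gs = \<Gamma> \<longrightarrow> mset ds = \<Delta> \<longrightarrow> hilbert L (Imp (Conj gs) (Disj ds))"
proof (induction rule: gder.induct)
  case (init_p p \<Gamma> \<Delta>)
  then show ?case
    by (auto intro!: ax_taut simp: taut_def peval_Conj peval_Disj wff_Conj wff_Disj)
next
  case (init_bot \<Gamma> \<Delta>)
  then show ?case
    by (auto intro!: ax_taut simp: taut_def peval_Conj peval_Disj wff_Conj wff_Disj)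
next
  case (R_and \<Gamma> a \<Delta> b)
  show ?case
  proof (intro allI impI)
    fix gs ds assume h: "mset gs = \<Gamma>" "mset ds = add_mset (And a b) \<Delta>"
    obtain d1 where d1: "mset d1 = add_mset a \<Delta>" using ex_mset by blast
    obtain d2 where d2: "mset d2 = add_mset b \<Delta>" using ex_mset by blast
    have 1: "hilbert L (Imp (Conj gs) (Disj d1))" using R_and h d1 by auto
    have 2: "hilbert L (Imp (Conj gs) (Disj d2))" using R_and h d2 by auto
    show "hilbert L (Imp (Conj gs) (Disj ds))"
      apply (rule hilbert_taut[of "[Imp (Conj gs) (Disj d1), Imp (Conj gs) (Disj d2)]"])
      using 1 2 h d1 d2 R_and.prems by (auto simp: peval_Conj peval_Disj wff_Conj wff_Disj)
  qed
next
  case (L_and a b \<Gamma> \<Delta>)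
  show ?case
  proof (intro allI impI)
    fix gs ds assume h: "mset gs = add_mset (And a b) \<Gamma>" "mset ds = \<Delta>"
    obtain g1 where g1: "mset g1 = add_mset a (add_mset b \<Gamma>)" using ex_mset by blast
    have 1: "hilbert L (Imp (Conj g1) (Disj ds))" using L_and h g1 by auto
    show "hilbert L (Imp (Conj gs) (Disj ds))"
      apply (rule hilbert_taut[of "[Imp (Conj g1) (Disj ds)]"])
      using 1 h g1 L_and.prems by (auto simp: peval_Conj peval_Disj wff_Conj wff_Disj)
  qed
next
  case (R_or \<Gamma> a b \<Delta>)
  show ?case
  proof (intro allI impI)
    fix gs ds assume h: "mset gs = \<Gamma>" "mset ds = add_mset (Or a b) \<Delta>"
    obtain d1 where d1: "mset d1 = add_mset a (add_mset b \<Delta>)" using ex_mset by blast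
    have 1: "hilbert L (Imp (Conj gs) (Disj d1))" using R_or h d1 by auto
    show "hilbert L (Imp (Conj gs) (Disj ds))"
      apply (rule hilbert_taut[of "[Imp (Conj gs) (Disj d1)]"])
      using 1 h d1 R_or.prems by (auto simp: peval_Conj peval_Disj wff_Conj wff_Disj)
  qed
next
  case (L_or a \<Gamma> \<Delta> b)
  show ?case
  proof (intro allI impI)
    fix gs ds assume h: "mset gs = add_mset (Or a b) \<Gamma>" "mset ds = \<Delta>"
    obtain g1 where g1: "mset g1 = add_mset a \<Gamma>" using ex_mset by blast
    obtain g2 where g2: "mset g2 = add_mset b \<Gamma>" using ex_mset by blast
    have 1: "hilbert L (Imp (Conj g1) (Disj ds))" using L_or h g1 by auto
    have 2: "hilbert L (Imp (Conj g2) (Disj ds))" using L_or h g2 by auto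
    show "hilbert L (Imp (Conj gs) (Disj ds))"
      apply (rule hilbert_taut[of "[Imp (Conj g1) (Disj ds), Imp (Conj g2) (Disj ds)]"])
      using 1 2 h g1 g2 L_or.prems by (auto simp: peval_Conj peval_Disj wff_Conj wff_Disj)
  qed
next
  case (R_imp a \<Gamma> b \<Delta>)
  show ?case
  proof (intro allI impI)
    fix gs ds assume h: "mset gs = \<Gamma>" "mset ds = add_mset (Imp a b) \<Delta>"
    obtain g1 where g1: "mset g1 = add_mset a \<Gamma>" using ex_mset by blast
    obtain d1 where d1: "mset d1 = add_mset b \<Delta>" using ex_mset by blast
    have 1: "hilbert L (Imp (Conj g1) (Disj d1))" using R_imp h g1 d1 by auto
    show "hilbert L (Imp (Conj gs) (Disj ds))"
      apply (rule hilbert_taut[of "[Imp (Conj g1) (Disj d1)]"])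
      using 1 h g1 d1 R_imp.prems by (auto simp: peval_Conj peval_Disj wff_Conj wff_Disj)
  qed
next
  case (L_imp \<Gamma> a \<Delta> b)
  show ?case
  proof (intro allI impI)
    fix gs ds assume h: "mset gs = add_mset (Imp a b) \<Gamma>" "mset ds = \<Delta>"
    obtain g0 where g0: "mset g0 = \<Gamma>" using ex_mset by blast
    obtain d1 where d1: "mset d1 = add_mset a \<Delta>" using ex_mset by blast
    obtain g2 where g2: "mset g2 = add_mset b \<Gamma>" using ex_mset by blast
    have 1: "hilbert L (Imp (Conj g0) (Disj d1))" using L_imp h g0 d1 by auto
    have 2: "hilbert L (Imp (Conj g2) (Disj ds))" using L_imp h g2 by auto
    show "hilbert L (Imp (Conj gs) (Disj ds))"
      apply (rule hilbert_taut[of "[Imp (Conj g0) (Disj d1), Imp (Conj g2) (Disj ds)]"])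
      using 1 2 h g0 g2 d1 L_imp.prems by (auto simp: peval_Conj peval_Disj wff_Conj wff_Disj)
  qed
next
  case (R_neg a \<Gamma> \<Delta>)
  show ?case
  proof (intro allI impI)
    fix gs ds assume h: "mset gs = \<Gamma>" "mset ds = add_mset (Neg a) \<Delta>"
    obtain g1 where g1: "mset g1 = add_mset a \<Gamma>" using ex_mset by blast
    obtain d1 where d1: "mset d1 = \<Delta>" using ex_mset by blast
    have 1: "hilbert L (Imp (Conj g1) (Disj d1))" using R_neg h g1 d1 by auto
    show "hilbert L (Imp (Conj gs) (Disj ds))"
      apply (rule hilbert_taut[of "[Imp (Conj g1) (Disj d1)]"])
      using 1 h g1 d1 R_neg.prems by (auto simp: peval_Conj peval_Disj wff_Conj wff_Disj)
  qed
next
  case (L_neg \<Gamma> a \<Delta>)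
  show ?case
  proof (intro allI impI)
    fix gs ds assume h: "mset gs = add_mset (Neg a) \<Gamma>" "mset ds = \<Delta>"
    obtain g1 where g1: "mset g1 = \<Gamma>" using ex_mset by blast
    obtain d1 where d1: "mset d1 = add_mset a \<Delta>" using ex_mset by blast
    have 1: "hilbert L (Imp (Conj g1) (Disj d1))" using L_neg h g1 d1 by auto
    show "hilbert L (Imp (Conj gs) (Disj ds))"
      apply (rule hilbert_taut[of "[Imp (Conj g1) (Disj d1)]"])
      using 1 h g1 d1 L_neg.prems by (auto simp: peval_Conj peval_Disj wff_Conj wff_Disj)
  qed
next
  case (D_K prs b G \<Sigma> \<Omega>)
  show ?case
  proof (intro allI impI)
    fix gs ds assume h: "mset gs = \<Sigma> + mset (map (\<lambda>(Gi, a). Dbox Gi a) prs)"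
      "mset ds = add_mset (Dbox G b) \<Omega>"
    have wpr: "\<forall>(Gi, a)\<in>set prs. Gi \<in> Grp \<and> wff a"
    proof (intro ballI, clarify)
      fix Gi a assume "(Gi, a) \<in> set prs"
      then have "Dbox Gi a \<in># \<Sigma> + mset (map (\<lambda>(Gi, a). Dbox Gi a) prs) + add_mset (Dbox G b) \<Omega>"
        by force
      then show "Gi \<in> Grp \<and> wff a" using D_K.prems by fastforce
    qed
    have wG: "G \<in> Grp" "wff b" using D_K.prems by auto
    have 1: "hilbert L (Imp (Conj (map snd prs)) b)"
      using D_K.IH wpr wG by (fastforce)
    let ?as = "map snd prs"
    have wa: "\<forall>a\<in>set ?as. wff a" using wpr by auto
    have c: "hilbert L (Imp (Conj (map (Dbox G) ?as)) (Dbox G (Conj ?as)))"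
      by (rule conj_box[OF wG(1) wa])
    have n: "hilbert L (Dbox G (Imp (Conj ?as) b))" by (rule nec[OF wG(1) 1])
    have k: "hilbert L (Imp (Dbox G (Imp (Conj ?as) b)) (Imp (Dbox G (Conj ?as)) (Dbox G b)))"
      using wG wa by (intro ax_K) (auto simp: wff_Conj)
    have m: "\<forall>p\<in>set (map (\<lambda>(Gi, a). Imp (Dbox Gi a) (Dbox G a)) prs). hilbert L p"
      using wpr wG D_K.hyps(2) by (fastforce intro!: ax_mono)
    show "hilbert L (Imp (Conj gs) (Disj ds))"
      apply (rule hilbert_taut[of "[Imp (Conj (map (Dbox G) ?as)) (Dbox G (Conj ?as)),
         Dbox G (Imp (Conj ?as) b), Imp (Dbox G (Imp (Conj ?as) b)) (Imp (Dbox G (Conj ?as)) (Dbox G b))]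
         @ map (\<lambda>(Gi, a). Imp (Dbox Gi a) (Dbox G a)) prs"])
      using c n k m apply auto[1]
      using h D_K.prems apply (auto simp: wff_Conj wff_Disj)[1]
    proof (intro allI impI)
      fix v
      assume P: "\<forall>p\<in>set ([Imp (Conj (map (Dbox G) ?as)) (Dbox G (Conj ?as)),
         Dbox G (Imp (Conj ?as) b), Imp (Dbox G (Imp (Conj ?as) b)) (Imp (Dbox G (Conj ?as)) (Dbox G b))]
         @ map (\<lambda>(Gi, a). Imp (Dbox Gi a) (Dbox G a)) prs). peval v p"
      show "peval v (Imp (Conj gs) (Disj ds))"
      proof (simp only: peval.simps, intro impI)
        assume cg: "peval v (Conj gs)"
        have "\<forall>(Gi, a)\<in>set prs. v (Dbox Gi a)"
        proof (intro ballI, clarify)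
          fix Gi a assume "(Gi, a) \<in> set prs"
          then have "Dbox Gi a \<in># mset gs" using h(1) by force
          then show "v (Dbox Gi a)" using cg by (auto simp: peval_Conj dest: bspec)
        qed
        then have "\<forall>(Gi, a)\<in>set prs. v (Dbox G a)" using P by fastforce
        then have "peval v (Conj (map (Dbox G) ?as))" by (auto simp: peval_Conj)
        then have "v (Dbox G b)" using P by simp
        then show "peval v (Disj ds)" using h(2) by (auto simp: peval_Disj)
      qed
    qed
  qed
next
  case (D_D \<Gamma> \<Sigma> ag \<Omega>)
  show ?case
  proof (intro allI impI)
    fix gs ds assume h: "mset gs = \<Sigma> + image_mset (Dbox {ag}) \<Gamma>" "mset ds = \<Omega>"
    obtain g0 where g0: "mset g0 = \<Gamma>" using ex_mset by blast
    have gA: "{ag} \<in> Grp" by (simp add: Grp_def)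
    have wa: "\<forall>a\<in>set g0. wff a"
    proof
      fix a assume "a \<in> set g0"
      then have "Dbox {ag} a \<in># \<Sigma> + image_mset (Dbox {ag}) \<Gamma> + \<Omega>" using g0 by force
      then show "wff a" using D_D.prems by fastforce
    qed
    have 1: "hilbert L (Imp (Conj g0) Bot)" using D_D.IH wa g0 by fastforce
    have c: "hilbert L (Imp (Conj (map (Dbox {ag}) g0)) (Dbox {ag} (Conj g0)))"
      by (rule conj_box[OF gA wa])
    have n: "hilbert L (Dbox {ag} (Imp (Conj g0) Bot))" by (rule nec[OF gA 1])
    have k: "hilbert L (Imp (Dbox {ag} (Imp (Conj g0) Bot)) (Imp (Dbox {ag} (Conj g0)) (Dbox {ag} Bot)))"
      using gA wa by (intro ax_K) (auto simp: wff_Conj)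
    have d: "hilbert L (Neg (Dbox {ag} Bot))" by (rule ax_D[OF D_D.hyps(1)])
    show "hilbert L (Imp (Conj gs) (Disj ds))"
      apply (rule hilbert_taut[of "[Imp (Conj (map (Dbox {ag}) g0)) (Dbox {ag} (Conj g0)),
         Dbox {ag} (Imp (Conj g0) Bot), Imp (Dbox {ag} (Imp (Conj g0) Bot)) (Imp (Dbox {ag} (Conj g0)) (Dbox {ag} Bot)),
         Neg (Dbox {ag} Bot)]"])
      using c n k d apply auto[1]
      using h D_D.prems apply (auto simp: wff_Conj wff_Disj)[1]
    proof (intro allI impI)
      fix v
      assume P: "\<forall>p\<in>set [Imp (Conj (map (Dbox {ag}) g0)) (Dbox {ag} (Conj g0)),
         Dbox {ag} (Imp (Conj g0) Bot), Imp (Dbox {ag} (Imp (Conj g0) Bot)) (Imp (Dbox {ag} (Conj g0)) (Dbox {ag} Bot)),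
         Neg (Dbox {ag} Bot)]. peval v p"
      show "peval v (Imp (Conj gs) (Disj ds))"
      proof (simp only: peval.simps, intro impI)
        assume cg: "peval v (Conj gs)"
        have "\<forall>a\<in>set g0. v (Dbox {ag} a)"
        proof
          fix a assume "a \<in> set g0"
          then have "Dbox {ag} a \<in># mset gs" using h(1) g0 by force
          then show "v (Dbox {ag} a)" using cg by (auto simp: peval_Conj dest: bspec)
        qed
        then have "peval v (Conj (map (Dbox {ag}) g0))" by (auto simp: peval_Conj)
        then have False using P by auto
        then show "peval v (Disj ds)" ..
      qed
    qed
  qed
next
  case (D_T G a \<Gamma> \<Delta>)
  show ?case
  proof (intro allI impI)
    fix gs ds assume h: "mset gs = add_mset (Dbox G a) \<Gamma>" "mset ds = \<Delta>"
    obtain g1 where g1: "mset g1 = add_mset (Dbox G a) (add_mset a \<Gamma>)" using ex_mset by blast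
    have 1: "hilbert L (Imp (Conj g1) (Disj ds))" using D_T h g1 by auto
    have t: "hilbert L (Imp (Dbox G a) a)" using D_T.hyps(1) D_T.prems by (intro ax_T) auto
    show "hilbert L (Imp (Conj gs) (Disj ds))"
      apply (rule hilbert_taut[of "[Imp (Conj g1) (Disj ds), Imp (Dbox G a) a]"])
      using 1 t h g1 D_T.prems by (auto simp: peval_Conj peval_Disj wff_Conj wff_Disj)
  qed
qed

theorem proposition3p13:
  fixes L :: logic and \<Gamma> \<Delta> :: "('a::finite) fm multiset"
  assumes "\<forall>a \<in># \<Gamma> + \<Delta>. wff a"
    and "gder L \<Gamma> \<Delta>"
  shows "\<forall>gs ds. mset gs = \<Gamma> \<longrightarrow> mset ds = \<Delta> \<longrightarrow> hilbert L (Imp (Conj gs) (Disj ds))"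
  using main[OF assms(2) assms(1)] .

end
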